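(* Let $A$ be a finite-dimensional algebra (not necessarily associative) over an algebraically closed field $K$, let $\delta,\gamma\in K$, and let $D$ be a $(\delta,\gamma)$-derivation of $A$, with root space decomposition $A=\bigoplus_{\lambda}A_\lambda$. Suppose there are roots $\lambda,\mu,\eta,\theta,\xi$ of $D$ (not necessarily distinct) such that $$0\ne A_\lambda A_\eta\subseteq A_\theta,\quad A_\theta A_\mu\ne 0,\qquad 0\ne A_\eta A_\mu\subseteq A_\xi,\quad A_\lambda A_\xi\ne 0,$$ and $(\delta^2-\delta)\lambda\ne(\gamma^2-\gamma)\mu$. Then the root space decomposition of $A$ with respect to $D$ is a non-semigroup grading of $A$.
   Context: An algebra means a vector space $A$ with a bilinear multiplication, with no identities assumed. For fixed $\delta,\gamma\in K$, a $(\delta,\gamma)$-derivation of $A$ is a linear map $D:A\to A$ with $D(xy)=\delta D(x)y+\gamma xD(y)$ for all $x,y\in A$. The root space decomposition with respect to $D$ is $A=\bigoplus_\lambda A_\lambda$ over the eigenvalues (roots) $\lambda$ of $D$, where $A_\lambda$ is the generalized eigenspace of $D$ for $\lambda$. A grading of $A$ over a set $\Gamma$ is a decomposition $A=\bigoplus_{g\in\Gamma}A_g$ together with a partial binary operation $*$ on $\Gamma$, defined for exactly those pairs $(g,h)$ with $A_gA_h\ne0$, such that $A_gA_h\subseteq A_{g*h}$ in that case. The grading is a semigroup grading if there is a semigroup $(G,\cdot)$ and an injective map $\Gamma\to G$ under which $g*h=g\cdot h$ whenever $A_gA_h\ne0$; otherwise it is a non-semigroup grading. *)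

theory Defs
  imports Main "HOL-Computational_Algebra.Polynomial"
begin

definition alg_closed :: "'k::field itself \<Rightarrow> bool" where
  "alg_closed _ \<longleftrightarrow> (\<forall>p::'k poly. 0 < degree p \<longrightarrow> (\<exists>x. poly p x = 0))"

definition fin_dim_vs :: "('k::field \<Rightarrow> 'a::ab_group_add \<Rightarrow> 'a) \<Rightarrow> bool" where
  "fin_dim_vs scale \<longleftrightarrow> vector_space scale \<and>
     (\<exists>B. finite B \<and> module.span scale B = UNIV)"

definition bilinear_mult :: "('k::field \<Rightarrow> 'a::ab_group_add \<Rightarrow> 'a) \<Rightarrow> ('a \<Rightarrow> 'a \<Rightarrow> 'a) \<Rightarrow> bool" where
  "bilinear_mult scale mul \<longleftrightarrow>
     (\<forall>x. Vector_Spaces.linear scale scale (mul x)) \<and>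
     (\<forall>y. Vector_Spaces.linear scale scale (\<lambda>x. mul x y))"

definition dg_derivation :: "('k::field \<Rightarrow> 'a::ab_group_add \<Rightarrow> 'a) \<Rightarrow> ('a \<Rightarrow> 'a \<Rightarrow> 'a)
    \<Rightarrow> 'k \<Rightarrow> 'k \<Rightarrow> ('a \<Rightarrow> 'a) \<Rightarrow> bool" where
  "dg_derivation scale mul \<delta> \<gamma> D \<longleftrightarrow>
     Vector_Spaces.linear scale scale D \<and>
     (\<forall>x y. D (mul x y) = scale \<delta> (mul (D x) y) + scale \<gamma> (mul x (D y)))"

definition gen_eigenspace :: "('k::field \<Rightarrow> 'a::ab_group_add \<Rightarrow> 'a) \<Rightarrow> ('a \<Rightarrow> 'a) \<Rightarrow> 'k \<Rightarrow> 'a set" where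
  "gen_eigenspace scale D l = {x. \<exists>n. ((\<lambda>v. D v - scale l v) ^^ n) x = 0}"

definition is_root :: "('k::field \<Rightarrow> 'a::ab_group_add \<Rightarrow> 'a) \<Rightarrow> ('a \<Rightarrow> 'a) \<Rightarrow> 'k \<Rightarrow> bool" where
  "is_root scale D l \<longleftrightarrow> (\<exists>x. x \<noteq> 0 \<and> D x = scale l x)"

definition roots :: "('k::field \<Rightarrow> 'a::ab_group_add \<Rightarrow> 'a) \<Rightarrow> ('a \<Rightarrow> 'a) \<Rightarrow> 'k set" where
  "roots scale D = {l. is_root scale D l}"

definition subsp_prod :: "('k::field \<Rightarrow> 'a::ab_group_add \<Rightarrow> 'a) \<Rightarrow> ('a \<Rightarrow> 'a \<Rightarrow> 'a)
    \<Rightarrow> 'a set \<Rightarrow> 'a set \<Rightarrow> 'a set" where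
  "subsp_prod scale mul U V = module.span scale {mul x y | x y. x \<in> U \<and> y \<in> V}"

text \<open>A grading over the index set G with components V: direct sum decomposition of the
  space, each component a subspace, and every nonzero product V g V h lies in some V k.
  (The partial operation g*h is then the index k, unique by directness when V k \<noteq> 0.)\<close>
definition is_grading :: "('k::field \<Rightarrow> 'a::ab_group_add \<Rightarrow> 'a) \<Rightarrow> ('a \<Rightarrow> 'a \<Rightarrow> 'a)
    \<Rightarrow> 'g set \<Rightarrow> ('g \<Rightarrow> 'a set) \<Rightarrow> bool" where
  "is_grading scale mul G V \<longleftrightarrow>
     (\<forall>g\<in>G. module.subspace scale (V g)) \<and>
     module.span scale (\<Union>g\<in>G. V g) = UNIV \<and>
     (\<forall>S x. finite S \<and> S \<subseteq> G \<and> (\<forall>g\<in>S. x g \<in> V g) \<and> sum x S = 0 \<longrightarrow> (\<forall>g\<in>S. x g = 0)) \<and>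
     (\<forall>g\<in>G. \<forall>h\<in>G. subsp_prod scale mul (V g) (V h) \<noteq> {0} \<longrightarrow>
        (\<exists>k\<in>G. subsp_prod scale mul (V g) (V h) \<subseteq> V k))"

definition is_semigroup :: "'s set \<Rightarrow> ('s \<Rightarrow> 's \<Rightarrow> 's) \<Rightarrow> bool" where
  "is_semigroup S op \<longleftrightarrow> (\<forall>a\<in>S. \<forall>b\<in>S. op a b \<in> S) \<and>
     (\<forall>a\<in>S. \<forall>b\<in>S. \<forall>c\<in>S. op (op a b) c = op a (op b c))"

definition realized_in_semigroup :: "('k::field \<Rightarrow> 'a::ab_group_add \<Rightarrow> 'a) \<Rightarrow> ('a \<Rightarrow> 'a \<Rightarrow> 'a)
    \<Rightarrow> 'g set \<Rightarrow> ('g \<Rightarrow> 'a set) \<Rightarrow> 's set \<Rightarrow> ('s \<Rightarrow> 's \<Rightarrow> 's) \<Rightarrow> ('g \<Rightarrow> 's) \<Rightarrow> bool" where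
  "realized_in_semigroup scale mul G V S op \<phi> \<longleftrightarrow>
     is_semigroup S op \<and> inj_on \<phi> G \<and> \<phi> ` G \<subseteq> S \<and>
     (\<forall>g\<in>G. \<forall>h\<in>G. \<forall>k\<in>G. subsp_prod scale mul (V g) (V h) \<noteq> {0} \<and>
        subsp_prod scale mul (V g) (V h) \<subseteq> V k \<longrightarrow> \<phi> k = op (\<phi> g) (\<phi> h))"

end

theory Submission imports Defs "HOL-Computational_Algebra.Computational_Algebra"
begin

lemma poly_bez:
  fixes q :: "'k::field poly"
  assumes "poly q a \<noteq> 0"
  shows "\<exists>r s. r * [:-a,1:]^m + s * q = 1"
proof (induct m)
  case 0 show ?case by (rule exI[of _ 1], rule exI[of _ 0]) simp
next
  case (Suc m)
  then obtain r s where rs: "r * [:-a,1:]^m + s * q = 1" by blast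
  define c where "c = poly q a"
  define sd where "sd = synthetic_div q a"
  have qe: "[:-a, 1:] * sd + [:c:] = q" unfolding c_def sd_def by (rule synthetic_div_correct')
  define r1 where "r1 = - smult (1/c) sd"
  define s1 where "s1 = [:1/c:]"
  have rs1: "r1 * [:-a,1:] + s1 * q = 1"
  proof -
    have qd: "q - [:-a, 1:] * sd = [:c:]" using qe by (simp add: algebra_simps)
    have "r1 * [:-a,1:] + s1 * q = smult (1/c) (q - [:-a, 1:] * sd)"
      unfolding r1_def s1_def by (simp add: algebra_simps smult_diff_right smult_add_right)
    also have "\<dots> = smult (1/c) [:c:]" by (simp only: qd)
    also have "\<dots> = 1" using assms by (simp add: c_def one_pCons)
    finally show ?thesis .
  qed
  have "(r*r1) * [:-a,1:]^Suc m + (r * s1 * [:-a,1:]^m + s * r1 * [:-a,1:] + s * s1 * q) * q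
      = (r * [:-a,1:]^m + s * q) * (r1 * [:-a,1:] + s1 * q)"
    by (simp add: algebra_simps)
  also have "\<dots> = 1" using rs rs1 by simp
  finally show ?case by blast
qed

locale dvs = vector_space scale for scale :: "'k::field \<Rightarrow> 'a::ab_group_add \<Rightarrow> 'a" (infixr \<open>*s\<close> 75) +
  fixes D :: "'a \<Rightarrow> 'a"
  assumes Dadd: "D (x + y) = D x + D y" and Dscale: "D (scale c x) = scale c (D x)"
begin

definition lin :: "('a \<Rightarrow> 'a) \<Rightarrow> bool" where
  "lin f \<longleftrightarrow> (\<forall>x y. f (x+y) = f x + f y) \<and> (\<forall>c x. f (c *s x) = c *s f x)"

lemma lin_add: "lin f \<Longrightarrow> f (x+y) = f x + f y" by (simp add: lin_def)
lemma lin_scale: "lin f \<Longrightarrow> f (c *s x) = c *s f x" by (simp add: lin_def)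
lemma lin_0: "lin f \<Longrightarrow> f 0 = 0"
  using lin_scale[of f 0 0] by simp
lemma lin_neg: "lin f \<Longrightarrow> f (- x) = - f x"
  using lin_scale[of f "-1" x] by simp
lemma lin_diff: "lin f \<Longrightarrow> f (x - y) = f x - f y"
  using lin_add[of f x "-y"] lin_neg[of f y] by simp
lemma lin_sum: "lin f \<Longrightarrow> f (sum g A) = (\<Sum>i\<in>A. f (g i))"
  by (induct A rule: infinite_finite_induct) (simp_all add: lin_0 lin_add)
lemma lin_comp: "lin f \<Longrightarrow> lin g \<Longrightarrow> lin (f \<circ> g)"
  by (simp add: lin_def)
lemma lin_funpow: "lin f \<Longrightarrow> lin (f ^^ n)"
  by (induct n) (simp_all add: lin_def)
lemma lin_D: "lin D" by (simp add: lin_def Dadd Dscale)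

definition T :: "'k \<Rightarrow> 'a \<Rightarrow> 'a" where "T l = (\<lambda>v. D v - l *s v)"

lemma lin_T: "lin (T l)"
  by (simp add: lin_def T_def Dadd Dscale algebra_simps)

lemma lin_Tn: "lin (T l ^^ n)" by (rule lin_funpow[OF lin_T])

lemma GE_def': "gen_eigenspace scale D l = {x. \<exists>n. (T l ^^ n) x = 0}"
  by (simp add: gen_eigenspace_def T_def)

lemma Tn_mono: "(T l ^^ n) x = 0 \<Longrightarrow> n \<le> m \<Longrightarrow> (T l ^^ m) x = 0"
proof -
  assume a: "(T l ^^ n) x = 0" "n \<le> m"
  have "(T l ^^ m) x = (T l ^^ (m - n)) ((T l ^^ n) x)"
    using a(2) by (simp add: funpow_add[symmetric, THEN fun_cong, simplified comp_def])
  then show ?thesis using a(1) lin_0[OF lin_Tn] by simp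
qed

lemma GE_subspace: "subspace (gen_eigenspace scale D l)"
  unfolding subspace_def GE_def'
proof (intro conjI allI impI ballI)
  show "0 \<in> {x. \<exists>n. (T l ^^ n) x = 0}" by (auto intro: exI[of _ 0])
next
  fix x y assume "x \<in> {x. \<exists>n. (T l ^^ n) x = 0}" "y \<in> {x. \<exists>n. (T l ^^ n) x = 0}"
  then obtain n m where "(T l ^^ n) x = 0" "(T l ^^ m) y = 0" by auto
  then have "(T l ^^ max n m) x = 0" "(T l ^^ max n m) y = 0"
    using Tn_mono by auto
  then have "(T l ^^ max n m) (x + y) = 0" using lin_add[OF lin_Tn] by simp
  then show "x + y \<in> {x. \<exists>n. (T l ^^ n) x = 0}" by blast
next
  fix c x assume "x \<in> {x. \<exists>n. (T l ^^ n) x = 0}"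
  then show "c *s x \<in> {x. \<exists>n. (T l ^^ n) x = 0}"
    using lin_scale[OF lin_Tn] by auto
qed

lemma T_comm: "T a (T b x) = T b (T a x)"
  by (simp add: T_def Dadd Dscale lin_diff[OF lin_D] algebra_simps)

lemma Tn_comm: "(T b ^^ n) (T a x) = T a ((T b ^^ n) x)"
  by (induct n) (simp_all add: T_comm)

lemma GE_T: "x \<in> gen_eigenspace scale D b \<Longrightarrow> T a x \<in> gen_eigenspace scale D b"
proof -
  assume "x \<in> gen_eigenspace scale D b"
  then obtain n where "(T b ^^ n) x = 0" unfolding GE_def' by auto
  then have "(T b ^^ n) (T a x) = 0" using Tn_comm lin_0[OF lin_T] by simp
  then show ?thesis unfolding GE_def' by blast
qed

lemma GE_Tn: "x \<in> gen_eigenspace scale D b \<Longrightarrow> (T a ^^ m) x \<in> gen_eigenspace scale D b"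
  by (induct m) (simp_all add: GE_T)

lemma eig_GE_zero:
  assumes "x \<in> gen_eigenspace scale D b" "T a x = 0" "a \<noteq> b"
  shows "x = 0"
proof -
  have Tb: "T b x = (a - b) *s x"
    using assms(2) by (simp add: T_def algebra_simps)
  have "\<And>n. (T b ^^ n) x = (a - b)^n *s x"
  proof -
    fix n show "(T b ^^ n) x = (a - b)^n *s x"
      by (induct n) (simp_all add: Tb lin_scale[OF lin_T] mult.commute)
  qed
  moreover obtain n where "(T b ^^ n) x = 0" using assms(1) unfolding GE_def' by auto
  ultimately have "(a - b)^n *s x = 0" by simp
  then show ?thesis using assms(3) by simp
qed

lemma GE_inj:
  "x \<in> gen_eigenspace scale D b \<Longrightarrow> (T a ^^ N) x = 0 \<Longrightarrow> a \<noteq> b \<Longrightarrow> x = 0"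
proof (induct N arbitrary: x)
  case 0 then show ?case by simp
next
  case (Suc N)
  have "(T a ^^ N) (T a x) = 0" using Suc.prems(2) by (simp add: funpow_Suc_right del: funpow.simps)
  then have "T a x = 0" using Suc.hyps[of "T a x"] GE_T[OF Suc.prems(1)] Suc.prems(3) by blast
  then show ?case using eig_GE_zero Suc.prems by blast
qed

lemma GE_disj:
  "x \<in> gen_eigenspace scale D a \<Longrightarrow> x \<in> gen_eigenspace scale D b \<Longrightarrow> a \<noteq> b \<Longrightarrow> x = 0"
  using GE_inj unfolding GE_def' by blast

lemma GE_indep:
  "finite S \<Longrightarrow> (\<forall>g\<in>S. x g \<in> gen_eigenspace scale D g) \<Longrightarrow> sum x S = 0 \<Longrightarrow> (\<forall>g\<in>S. x g = 0)"
proof (induct S arbitrary: x rule: finite_induct)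
  case empty then show ?case by simp
next
  case (insert a F)
  have xa: "x a + sum x F = 0" using insert by simp
  obtain N where N: "(T a ^^ N) (x a) = 0" using insert.prems(1) unfolding GE_def' by auto
  define y where "y g = (T a ^^ N) (x g)" for g
  have "sum y F = (T a ^^ N) (sum x F)" unfolding y_def by (simp add: lin_sum[OF lin_Tn])
  also have "sum x F = - x a" using xa by (simp add: eq_neg_iff_add_eq_0 add.commute)
  also have "(T a ^^ N) (- x a) = 0" using N lin_neg[OF lin_Tn] by simp
  finally have "sum y F = 0" .
  moreover have "\<forall>g\<in>F. y g \<in> gen_eigenspace scale D g"
    using insert.prems(1) GE_Tn unfolding y_def by auto
  ultimately have "\<forall>g\<in>F. y g = 0" using insert.hyps(3) by blast
  then have F0: "\<forall>g\<in>F. x g = 0"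
    using GE_inj insert.prems(1) insert.hyps(2) unfolding y_def by fastforce
  then have "sum x F = 0" by simp
  then have "x a = 0" using xa by simp
  then show ?case using F0 by simp
qed

lemma GE_root:
  assumes "x \<in> gen_eigenspace scale D a" "x \<noteq> 0"
  shows "is_root scale D a"
proof -
  obtain n where n: "(T a ^^ n) x = 0" using assms(1) unfolding GE_def' by auto
  have "\<And>x. x \<noteq> 0 \<Longrightarrow> (T a ^^ n) x = 0 \<Longrightarrow> \<exists>u. u \<noteq> 0 \<and> T a u = 0"
  proof (induct n)
    case 0 then show ?case by simp
  next
    case (Suc n)
    show ?case
    proof (cases "T a x = 0")
      case True then show ?thesis using Suc by blast
    next
      case False
      have "(T a ^^ n) (T a x) = 0" using Suc.prems(2) by (simp add: funpow_Suc_right del: funpow.simps)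
      then show ?thesis using Suc.hyps False by blast
    qed
  qed
  then obtain u where "u \<noteq> 0" "T a u = 0" using n assms(2) by blast
  then show ?thesis unfolding is_root_def T_def by auto
qed


definition pev :: "'k poly \<Rightarrow> 'a \<Rightarrow> 'a" where
  "pev p x = (\<Sum>i\<le>degree p. coeff p i *s (D^^i) x)"

lemma pev_bound: "degree p \<le> n \<Longrightarrow> pev p x = (\<Sum>i\<le>n. coeff p i *s (D^^i) x)"
  unfolding pev_def by (rule sum.mono_neutral_left) (auto simp: coeff_eq_0)

lemma pev_add: "pev (p+q) x = pev p x + pev q x"
proof -
  let ?n = "max (degree p) (degree q)"
  have "degree (p+q) \<le> ?n" by (rule degree_add_le) auto
  then show ?thesis
    by (simp add: pev_bound[of _ ?n] scale_left_distrib sum.distrib)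
qed

lemma pev_smult: "pev (smult c p) x = c *s pev p x"
  by (simp add: pev_bound[OF degree_smult_le] pev_def scale_sum_right)

lemma pev_0: "pev 0 x = 0" by (simp add: pev_def)

lemma pev_pCons: "pev (pCons c p) x = c *s x + D (pev p x)"
proof -
  have "pev (pCons c p) x = (\<Sum>i\<le>Suc (degree p). coeff (pCons c p) i *s (D^^i) x)"
    by (rule pev_bound) (rule degree_pCons_le)
  also have "\<dots> = c *s x + (\<Sum>i\<le>degree p. coeff p i *s D ((D^^i) x))"
    by (subst sum.atMost_Suc_shift) simp
  also have "(\<Sum>i\<le>degree p. coeff p i *s D ((D^^i) x)) = D (pev p x)"
    unfolding pev_def by (simp add: lin_sum[OF lin_D] lin_scale[OF lin_D])
  finally show ?thesis .
qed

lemma pev_mult: "pev (p*q) x = pev p (pev q x)"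
proof (induct p rule: pCons_induct)
  case 0 then show ?case by (simp add: pev_0)
next
  case (pCons a p)
  have "pev (pCons a p * q) x = a *s pev q x + (0 *s x + D (pev (p*q) x))"
    by (simp only: mult_pCons_left pev_add pev_smult pev_pCons)
  also have "\<dots> = pev (pCons a p) (pev q x)" using pCons by (simp add: pev_pCons)
  finally show ?case .
qed

lemma pev_1: "pev 1 x = x"
  by (simp add: one_pCons pev_pCons pev_0 lin_0[OF lin_D])

lemma pev_at0: "pev p 0 = 0"
  by (simp add: pev_def lin_0[OF lin_funpow[OF lin_D]])

lemma pev_lin: "pev [:-a,1:] x = T a x"
  by (simp add: pev_pCons pev_0 lin_0[OF lin_D] T_def)

lemma pev_pow: "pev ([:-a,1:]^m) x = (T a ^^ m) x"
proof (induct m arbitrary: x)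
  case 0 then show ?case by (simp add: pev_1)
next
  case (Suc m) then show ?case by (simp only: power_Suc pev_mult pev_lin funpow.simps comp_def)
qed

lemma coeffs_to_poly:
  assumes "\<exists>k\<le>N. c k \<noteq> 0" "(\<Sum>k\<le>N. c k *s (D^^k) v) = 0"
  shows "\<exists>p. p \<noteq> 0 \<and> pev p v = 0"
proof -
  define p where "p = (\<Sum>i\<le>N. monom (c i) i)"
  have cp: "coeff p j = (if j \<le> N then c j else 0)" for j
    unfolding p_def by (simp add: coeff_sum coeff_monom)
  have "degree p \<le> N" by (rule degree_le) (simp add: cp)
  then have "pev p v = (\<Sum>k\<le>N. c k *s (D^^k) v)"
    by (simp add: pev_bound cp)
  moreover have "p \<noteq> 0" using assms(1) cp by (metis coeff_0)
  ultimately show ?thesis using assms(2) by auto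
qed

lemma annihilator:
  assumes fB: "finite B" and sB: "span B = UNIV"
  shows "\<exists>p. p \<noteq> 0 \<and> pev p v = 0"
proof -
  define N where "N = card B"
  define f where "f k = (D^^k) v" for k
  show ?thesis
  proof (cases "inj_on f {..N}")
    case False
    then obtain i j where ij: "i \<le> N" "j \<le> N" "i \<noteq> j" "f i = f j"
      unfolding inj_on_def by auto
    define c where "c k = (if k = i then 1 else if k = j then -1 else (0::'k))" for k
    have "\<And>k. c k *s f k = (if k = i then f i else 0) + (if k = j then - f j else 0)"
      unfolding c_def using ij by auto
    then have "(\<Sum>k\<le>N. c k *s (D^^k) v) = 0"
      unfolding f_def[symmetric] using ij by (simp add: sum.distrib)
    moreover have "\<exists>k\<le>N. c k \<noteq> 0" using ij unfolding c_def by auto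
    ultimately show ?thesis by (rule coeffs_to_poly[rotated])
  next
    case True
    have "card (f ` {..N}) = Suc N" using card_image[OF True] by simp
    then have "dependent (f ` {..N})"
      using independent_span_bound[OF fB, of "f ` {..N}"] sB unfolding N_def by auto
    then obtain t u where tu: "finite t" "t \<subseteq> f ` {..N}" "(\<Sum>w\<in>t. u w *s w) = 0" "\<exists>w\<in>t. u w \<noteq> 0"
      unfolding dependent_explicit by blast
    define c where "c k = (if f k \<in> t then u (f k) else 0)" for k
    define g where "g w = (if w \<in> t then u w *s w else 0)" for w
    have "(\<Sum>k\<le>N. c k *s (D^^k) v) = (\<Sum>k\<le>N. g (f k))"
      unfolding c_def g_def f_def by (rule sum.cong) auto
    also have "\<dots> = sum g (f ` {..N})" by (rule sum.reindex[OF True, symmetric, unfolded comp_def])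
    also have "\<dots> = (\<Sum>w\<in>f ` {..N} \<inter> t. u w *s w)"
      unfolding g_def by (rule sum.inter_restrict[symmetric]) simp
    also have "f ` {..N} \<inter> t = t" using tu(2) by blast
    finally have "(\<Sum>k\<le>N. c k *s (D^^k) v) = 0" using tu(3) by simp
    moreover have "\<exists>k\<le>N. c k \<noteq> 0" using tu(2,4) unfolding c_def by auto
    ultimately show ?thesis by (rule coeffs_to_poly[rotated])
  qed
qed

lemma decomp_poly:
  assumes ac: "alg_closed TYPE('k)"
  shows "degree p = n \<Longrightarrow> p \<noteq> 0 \<Longrightarrow> pev p v = 0 \<Longrightarrow>
    v \<in> span (\<Union>g\<in>roots scale D. gen_eigenspace scale D g)"
proof (induct n arbitrary: p v rule: less_induct)
  case (less n)
  show ?case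
  proof (cases "degree p = 0")
    case True
    then have "pev p v = coeff p 0 *s v" by (simp add: pev_def)
    moreover have "coeff p 0 \<noteq> 0" using True less.prems(2) by (metis leading_coeff_0_iff)
    ultimately have "v = 0" using less.prems(3) by simp
    then show ?thesis by (simp add: span_zero)
  next
    case False
    then obtain a where "poly p a = 0" using ac unfolding alg_closed_def by auto
    define m where "m = order a p"
    obtain q where pq: "p = [:-a,1:]^m * q" and nd: "\<not> [:-a,1:] dvd q"
      using order_decomp[OF less.prems(2)] unfolding m_def by blast
    have qa: "poly q a \<noteq> 0" using nd poly_eq_0_iff_dvd by blast
    have "m \<noteq> 0" using \<open>poly p a = 0\<close> less.prems(2) order_root unfolding m_def by blast
    have q0: "q \<noteq> 0" using pq less.prems(2) by auto
    have "degree p = m + degree q" using pq q0 by (simp add: degree_mult_eq degree_linear_power)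
    then have dq: "degree q < n" using \<open>m \<noteq> 0\<close> less.prems(1) by simp
    obtain r s where rs: "r * [:-a,1:]^m + s * q = 1" using poly_bez[OF qa] by blast
    define u1 where "u1 = pev (s*q) v"
    define u2 where "u2 = pev (r*[:-a,1:]^m) v"
    have v: "v = u2 + u1" using rs pev_1[of v] unfolding u1_def u2_def by (metis pev_add)
    have "pev q u2 = pev (r * p) v" unfolding u2_def pq
      by (simp add: pev_mult[symmetric] algebra_simps)
    also have "\<dots> = 0" using less.prems(3) by (simp add: pev_mult pev_at0)
    finally have "u2 \<in> span (\<Union>g\<in>roots scale D. gen_eigenspace scale D g)"
      using less.hyps[OF dq refl q0] by blast
    moreover have "u1 \<in> span (\<Union>g\<in>roots scale D. gen_eigenspace scale D g)"
    proof -
      have "(T a ^^ m) u1 = pev (s * p) v" unfolding u1_def pq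
        by (simp add: pev_pow[symmetric] pev_mult[symmetric] algebra_simps)
      also have "\<dots> = 0" using less.prems(3) by (simp add: pev_mult pev_at0)
      finally have g: "u1 \<in> gen_eigenspace scale D a" unfolding GE_def' by blast
      show ?thesis
      proof (cases "u1 = 0")
        case True then show ?thesis by (simp add: span_zero)
      next
        case False
        then have "a \<in> roots scale D" using GE_root[OF g] by (simp add: roots_def)
        then show ?thesis using g by (blast intro: span_base)
      qed
    qed
    ultimately show ?thesis using v by (simp add: span_add)
  qed
qed

lemma decomp:
  assumes "alg_closed TYPE('k)" "finite B" "span B = UNIV"
  shows "span (\<Union>g\<in>roots scale D. gen_eigenspace scale D g) = UNIV"
proof -
  have "v \<in> span (\<Union>g\<in>roots scale D. gen_eigenspace scale D g)" for v
    using annihilator[OF assms(2,3), of v] decomp_poly[OF assms(1) refl] by blast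
  then show ?thesis by blast
qed

end

locale dalg = dvs scale D for scale :: "'k::field \<Rightarrow> 'a::ab_group_add \<Rightarrow> 'a" (infixr \<open>*s\<close> 75) and D +
  fixes mul :: "'a \<Rightarrow> 'a \<Rightarrow> 'a" and \<delta> \<gamma> :: 'k
  assumes mul_add_l: "mul (x + x') y = mul x y + mul x' y"
    and mul_add_r: "mul x (y + y') = mul x y + mul x y'"
    and mul_scale_l: "mul (scale c x) y = scale c (mul x y)"
    and mul_scale_r: "mul x (scale c y) = scale c (mul x y)"
    and deriv: "D (mul x y) = scale \<delta> (mul (D x) y) + scale \<gamma> (mul x (D y))"
begin

lemma lin_mul_r: "lin (mul x)" by (simp add: lin_def mul_add_r mul_scale_r)
lemma lin_mul_l: "lin (\<lambda>x. mul x y)" by (simp add: lin_def mul_add_l mul_scale_l)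

lemma T_mul: "T (\<delta>*g + \<gamma>*h) (mul x y) = \<delta> *s mul (T g x) y + \<gamma> *s mul x (T h y)"
proof -
  have m1: "mul (T g x) y = mul (D x) y - g *s mul x y"
    unfolding T_def using lin_diff[OF lin_mul_l] mul_scale_l by simp
  have m2: "mul x (T h y) = mul x (D y) - h *s mul x y"
    unfolding T_def using lin_diff[OF lin_mul_r] mul_scale_r by simp
  have "T (\<delta>*g + \<gamma>*h) (mul x y) = D (mul x y) - (\<delta>*g + \<gamma>*h) *s mul x y" by (simp add: T_def)
  also have "\<dots> = \<delta> *s (mul (D x) y - g *s mul x y) + \<gamma> *s (mul x (D y) - h *s mul x y)"
    by (simp add: deriv algebra_simps)
  finally show ?thesis by (simp only: m1 m2)
qed

lemma prod_vanish:
  "\<forall>a b x y. a + b = n \<longrightarrow> (T g ^^ a) x = 0 \<longrightarrow> (T h ^^ b) y = 0 \<longrightarrow>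
      (T (\<delta>*g + \<gamma>*h) ^^ n) (mul x y) = 0"
proof (induct n)
  case 0 then show ?case using lin_0[OF lin_mul_l] by simp
next
  case (Suc n)
  show ?case
  proof (intro allI impI)
    fix a b x y
    assume ab: "a + b = Suc n" and x: "(T g ^^ a) x = 0" and y: "(T h ^^ b) y = 0"
    show "(T (\<delta>*g + \<gamma>*h) ^^ Suc n) (mul x y) = 0"
    proof (cases "a = 0 \<or> b = 0")
      case True
      then have "mul x y = 0" using x y lin_0[OF lin_mul_l] lin_0[OF lin_mul_r] by auto
      then show ?thesis by (simp del: funpow.simps add: lin_0[OF lin_Tn])
    next
      case False
      then obtain a' b' where a': "a = Suc a'" and b': "b = Suc b'" by (metis not0_implies_Suc)
      have x': "(T g ^^ a') (T g x) = 0" using x a' by (simp add: funpow_Suc_right del: funpow.simps)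
      have y': "(T h ^^ b') (T h y) = 0" using y b' by (simp add: funpow_Suc_right del: funpow.simps)
      have "(T (\<delta>*g + \<gamma>*h) ^^ Suc n) (mul x y) = (T (\<delta>*g + \<gamma>*h) ^^ n) (T (\<delta>*g + \<gamma>*h) (mul x y))"
        by (simp add: funpow_Suc_right del: funpow.simps)
      also have "\<dots> = \<delta> *s (T (\<delta>*g + \<gamma>*h) ^^ n) (mul (T g x) y) + \<gamma> *s (T (\<delta>*g + \<gamma>*h) ^^ n) (mul x (T h y))"
        by (simp add: T_mul lin_add[OF lin_Tn] lin_scale[OF lin_Tn])
      also have "(T (\<delta>*g + \<gamma>*h) ^^ n) (mul (T g x) y) = 0"
        using Suc.hyps x' y ab a' by simp
      also have "(T (\<delta>*g + \<gamma>*h) ^^ n) (mul x (T h y)) = 0"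
        using Suc.hyps x y' ab b' by simp
      finally show ?thesis by simp
    qed
  qed
qed

lemma mul_GE: "x \<in> gen_eigenspace scale D g \<Longrightarrow> y \<in> gen_eigenspace scale D h \<Longrightarrow>
   mul x y \<in> gen_eigenspace scale D (\<delta>*g + \<gamma>*h)"
  unfolding GE_def' using prod_vanish by blast

lemma prod_sub: "subsp_prod scale mul (gen_eigenspace scale D g) (gen_eigenspace scale D h)
   \<subseteq> gen_eigenspace scale D (\<delta>*g + \<gamma>*h)"
  unfolding subsp_prod_def by (rule span_minimal) (auto intro: mul_GE GE_subspace)

lemma prod_key:
  assumes "subsp_prod scale mul (gen_eigenspace scale D g) (gen_eigenspace scale D h) \<noteq> {0}"
  shows "\<delta>*g + \<gamma>*h \<in> roots scale D"
    and "\<And>k. subsp_prod scale mul (gen_eigenspace scale D g) (gen_eigenspace scale D h)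
           \<subseteq> gen_eigenspace scale D k \<Longrightarrow> k = \<delta>*g + \<gamma>*h"
proof -
  have "0 \<in> subsp_prod scale mul (gen_eigenspace scale D g) (gen_eigenspace scale D h)"
    unfolding subsp_prod_def by (rule span_zero)
  then obtain w where w: "w \<in> subsp_prod scale mul (gen_eigenspace scale D g) (gen_eigenspace scale D h)" "w \<noteq> 0"
    using assms by blast
  have wg: "w \<in> gen_eigenspace scale D (\<delta>*g + \<gamma>*h)" using w(1) prod_sub by blast
  then show "\<delta>*g + \<gamma>*h \<in> roots scale D" using GE_root w(2) by (simp add: roots_def)
  fix k assume "subsp_prod scale mul (gen_eigenspace scale D g) (gen_eigenspace scale D h)
           \<subseteq> gen_eigenspace scale D k"
  then have "w \<in> gen_eigenspace scale D k" using w(1) by blast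
  then show "k = \<delta>*g + \<gamma>*h" using GE_disj[OF _ wg] w(2) by blast
qed

end
theorem mainTheorem2:
  fixes scale :: "'k::field \<Rightarrow> 'a::ab_group_add \<Rightarrow> 'a"
    and mul :: "'a \<Rightarrow> 'a \<Rightarrow> 'a"
    and D :: "'a \<Rightarrow> 'a"
    and \<delta> \<gamma> lam \<mu> \<eta> \<theta> \<xi> :: 'k
  assumes "alg_closed TYPE('k)"
    and "fin_dim_vs scale"
    and "bilinear_mult scale mul"
    and "dg_derivation scale mul \<delta> \<gamma> D"
    and "lam \<in> roots scale D" "\<mu> \<in> roots scale D" "\<eta> \<in> roots scale D"
        "\<theta> \<in> roots scale D" "\<xi> \<in> roots scale D"
    and "subsp_prod scale mul (gen_eigenspace scale D lam) (gen_eigenspace scale D \<eta>) \<noteq> {0}"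
    and "subsp_prod scale mul (gen_eigenspace scale D lam) (gen_eigenspace scale D \<eta>)
           \<subseteq> gen_eigenspace scale D \<theta>"
    and "subsp_prod scale mul (gen_eigenspace scale D \<theta>) (gen_eigenspace scale D \<mu>) \<noteq> {0}"
    and "subsp_prod scale mul (gen_eigenspace scale D \<eta>) (gen_eigenspace scale D \<mu>) \<noteq> {0}"
    and "subsp_prod scale mul (gen_eigenspace scale D \<eta>) (gen_eigenspace scale D \<mu>)
           \<subseteq> gen_eigenspace scale D \<xi>"
    and "subsp_prod scale mul (gen_eigenspace scale D lam) (gen_eigenspace scale D \<xi>) \<noteq> {0}"
    and "(\<delta>\<^sup>2 - \<delta>) * lam \<noteq> (\<gamma>\<^sup>2 - \<gamma>) * \<mu>"
  shows "is_grading scale mul (roots scale D) (gen_eigenspace scale D) \<and>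
    (\<forall>(S :: 's set) op \<phi>. \<not> realized_in_semigroup scale mul (roots scale D)
        (gen_eigenspace scale D) S op \<phi>)"
proof -
  note as = assms
  from assms(2) have vs: "vector_space scale" and "\<exists>B. finite B \<and> module.span scale B = UNIV"
    unfolding fin_dim_vs_def by auto
  then obtain B where fB: "finite B" and sB: "module.span scale B = UNIV" by blast
  from assms(4) have Dlin: "Vector_Spaces.linear scale scale D"
    and der: "\<And>x y. D (mul x y) = scale \<delta> (mul (D x) y) + scale \<gamma> (mul x (D y))"
    unfolding dg_derivation_def by auto
  from assms(3) have ml: "\<And>x. Vector_Spaces.linear scale scale (mul x)"
    and mr: "\<And>y. Vector_Spaces.linear scale scale (\<lambda>x. mul x y)"
    unfolding bilinear_mult_def by auto
  interpret dalg scale D mul \<delta> \<gamma>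
  proof (intro dalg.intro dvs.intro dvs_axioms.intro dalg_axioms.intro vs)
    show "D (x + y) = D x + D y" for x y using Dlin by (simp add: Vector_Spaces.linear_iff)
    show "D (scale c x) = scale c (D x)" for c x using Dlin by (simp add: Vector_Spaces.linear_iff)
    show "mul (x + x') y = mul x y + mul x' y" for x x' y using mr[of y] by (simp add: Vector_Spaces.linear_iff)
    show "mul x (y + y') = mul x y + mul x y'" for x y y' using ml[of x] by (simp add: Vector_Spaces.linear_iff)
    show "mul (scale c x) y = scale c (mul x y)" for c x y using mr[of y] by (simp add: Vector_Spaces.linear_iff)
    show "mul x (scale c y) = scale c (mul x y)" for c x y using ml[of x] by (simp add: Vector_Spaces.linear_iff)
    show "D (mul x y) = scale \<delta> (mul (D x) y) + scale \<gamma> (mul x (D y))" for x y by (rule der)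
  qed
  have G: "is_grading scale mul (roots scale D) (gen_eigenspace scale D)"
    unfolding is_grading_def
  proof (intro conjI)
    show "\<forall>g\<in>roots scale D. subspace (gen_eigenspace scale D g)" using GE_subspace by blast
    show "span (\<Union>g\<in>roots scale D. gen_eigenspace scale D g) = UNIV"
      by (rule decomp[OF assms(1) fB sB])
    show "\<forall>S x. finite S \<and> S \<subseteq> roots scale D \<and> (\<forall>g\<in>S. x g \<in> gen_eigenspace scale D g) \<and> sum x S = 0 \<longrightarrow>
        (\<forall>g\<in>S. x g = 0)" using GE_indep by blast
    show "\<forall>g\<in>roots scale D. \<forall>h\<in>roots scale D.
       subsp_prod scale mul (gen_eigenspace scale D g) (gen_eigenspace scale D h) \<noteq> {0} \<longrightarrow>
       (\<exists>k\<in>roots scale D. subsp_prod scale mul (gen_eigenspace scale D g) (gen_eigenspace scale D h)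
          \<subseteq> gen_eigenspace scale D k)"
      using prod_key(1) prod_sub by blast
  qed
  have th: "\<theta> = \<delta>*lam + \<gamma>*\<eta>" using prod_key(2)[OF assms(10) assms(11)] .
  have xi: "\<xi> = \<delta>*\<eta> + \<gamma>*\<mu>" using prod_key(2)[OF assms(13) assms(14)] .
  define k1 where "k1 = \<delta>*\<theta> + \<gamma>*\<mu>"
  define k2 where "k2 = \<delta>*lam + \<gamma>*\<xi>"
  have k1r: "k1 \<in> roots scale D" unfolding k1_def using prod_key(1)[OF assms(12)] .
  have k2r: "k2 \<in> roots scale D" unfolding k2_def using prod_key(1)[OF assms(15)] .
  have k1s: "subsp_prod scale mul (gen_eigenspace scale D \<theta>) (gen_eigenspace scale D \<mu>) \<subseteq> gen_eigenspace scale D k1"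
    unfolding k1_def by (rule prod_sub)
  have k2s: "subsp_prod scale mul (gen_eigenspace scale D lam) (gen_eigenspace scale D \<xi>) \<subseteq> gen_eigenspace scale D k2"
    unfolding k2_def by (rule prod_sub)
  have ne: "k1 \<noteq> k2"
  proof
    assume "k1 = k2"
    then have "(\<delta>\<^sup>2 - \<delta>) * lam - (\<gamma>\<^sup>2 - \<gamma>) * \<mu> = 0"
      unfolding k1_def k2_def th xi by (simp add: power2_eq_square algebra_simps)
    then show False using assms(16) by simp
  qed
  have NS: "\<not> realized_in_semigroup scale mul (roots scale D) (gen_eigenspace scale D) S op \<phi>"
    for S :: "'s set" and op \<phi>
  proof
    assume R: "realized_in_semigroup scale mul (roots scale D) (gen_eigenspace scale D) S op \<phi>"
    then have ass: "\<forall>a\<in>S. \<forall>b\<in>S. \<forall>c\<in>S. op (op a b) c = op a (op b c)"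
      and inj: "inj_on \<phi> (roots scale D)" and img: "\<phi> ` roots scale D \<subseteq> S"
      and hom: "\<forall>g\<in>roots scale D. \<forall>h\<in>roots scale D. \<forall>k\<in>roots scale D.
         subsp_prod scale mul (gen_eigenspace scale D g) (gen_eigenspace scale D h) \<noteq> {0} \<and>
         subsp_prod scale mul (gen_eigenspace scale D g) (gen_eigenspace scale D h) \<subseteq> gen_eigenspace scale D k
         \<longrightarrow> \<phi> k = op (\<phi> g) (\<phi> h)"
      unfolding realized_in_semigroup_def is_semigroup_def by auto
    have e1: "\<phi> k1 = op (\<phi> \<theta>) (\<phi> \<mu>)" using hom as(6,8) k1r assms(12) k1s by blast
    have e2: "\<phi> \<theta> = op (\<phi> lam) (\<phi> \<eta>)" using hom as(5,7,8) assms(10,11) by blast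
    have e3: "\<phi> \<xi> = op (\<phi> \<eta>) (\<phi> \<mu>)" using hom as(6,7,9) assms(13,14) by blast
    have e4: "\<phi> k2 = op (\<phi> lam) (\<phi> \<xi>)" using hom as(5,9) k2r assms(15) k2s by blast
    have "\<phi> lam \<in> S" "\<phi> \<eta> \<in> S" "\<phi> \<mu> \<in> S" using img as(5,6,7) by auto
    then have "\<phi> k1 = \<phi> k2" using e1 e2 e3 e4 ass by simp
    then have "k1 = k2" using inj k1r k2r by (simp add: inj_on_eq_iff)
    then show False using ne by simp
  qed
  show ?thesis using G NS by blast
qed

end
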